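(* Let $F:\mathcal{S}^{n\times n}\to\mathbb{R}$, $\boldsymbol{G}:\mathcal{S}^{n\times n}\to\mathbb{R}^q$, and let $\mathcal{C}\subseteq\mathbb{R}^n$ be closed. Consider the problems (P1) $\min F(\boldsymbol{X})$ subject to $\boldsymbol{G}(\boldsymbol{X})=\boldsymbol{0}$, $\boldsymbol{\lambda}(\boldsymbol{X})\in\mathcal{C}$, $\boldsymbol{X}\in\mathcal{S}^{n\times n}$; (P2) $\min f(\boldsymbol{Q},\boldsymbol{\lambda}):=F(\boldsymbol{Q}\operatorname{Diag}(\boldsymbol{\lambda})\boldsymbol{Q}^\top)$ subject to $\boldsymbol{G}(\boldsymbol{Q}\operatorname{Diag}(\boldsymbol{\lambda})\boldsymbol{Q}^\top)=\boldsymbol{0}$, $\boldsymbol{\lambda}\in\mathcal{C}$, $(\boldsymbol{Q},\boldsymbol{\lambda})\in\mathcal{O}(n,n)\times\mathbb{R}^n_\geq$. A matrix $\boldsymbol{X}^*\in\mathcal{S}^{n\times n}$ with pairwise distinct eigenvalues is a local minimum of (P1) if and only if one of its spectral decompositions $(\boldsymbol{Q}^*,\boldsymbol{\lambda}(\boldsymbol{X}^* ))$ (i.e. $\boldsymbol{Q}^*\in\mathcal{O}(n,n)$ with $\boldsymbol{X}^*=\boldsymbol{Q}^*\operatorname{Diag}(\boldsymbol{\lambda}(\boldsymbol{X}^* ))\boldsymbol{Q}^{*\top}$) is a local minimum of (P2). Furthermore, if one spectral decomposition of $\boldsymbol{X}^*$ is a local minimum of (P2), then all of its spectral decompositions are local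 minima of (P2).
   Context: $\mathcal{S}^{n\times n}$: real symmetric $n\times n$ matrices; $\mathcal{O}(n,n)$: real orthogonal $n\times n$ matrices; $\boldsymbol{\lambda}(\boldsymbol{X})$: eigenvalues of $\boldsymbol{X}$ in nonincreasing order; $\mathbb{R}^n_{\geq}=\{\boldsymbol{x}\in\mathbb{R}^n:x_1\ge\cdots\ge x_n\}$. Feasible sets: $\mathcal{X}_1=\{\boldsymbol{X}\in\mathcal{S}^{n\times n}:\boldsymbol{G}(\boldsymbol{X})=\boldsymbol{0},\ \boldsymbol{\lambda}(\boldsymbol{X})\in\mathcal{C}\}$ and $\mathcal{X}_2=\{(\boldsymbol{Q},\boldsymbol{\lambda})\in\mathcal{O}(n,n)\times\mathbb{R}^n_\geq:\boldsymbol{G}(\boldsymbol{Q}\operatorname{Diag}(\boldsymbol{\lambda})\boldsymbol{Q}^\top)=\boldsymbol{0},\ \boldsymbol{\lambda}\in\mathcal{C}\}$. $\boldsymbol{X}^*$ is a local minimum of (P1) if $\boldsymbol{X}^*\in\mathcal{X}_1$ and there is $\delta_1>0$ with $F(\boldsymbol{X}^* )\le F(\boldsymbol{X})$ for all $\boldsymbol{X}\in\mathcal{X}_1$ with $\|\boldsymbol{X}-\boldsymbol{X}^*\|_F\le\delta_1$. $(\boldsymbol{Q}^*,\boldsymbol{\lambda}^* )$ is a local minimum of (P2) if $(\boldsymbol{Q}^*,\boldsymbol{\lambda}^* )\in\mathcal{X}_2$ and there is $\delta_2>0$ with $f(\boldsymbol{Q}^*,\boldsymbol{\lambda}^* )\le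 f(\boldsymbol{Q},\boldsymbol{\lambda})$ for all $(\boldsymbol{Q},\boldsymbol{\lambda})\in\mathcal{X}_2$ with $\|\boldsymbol{Q}-\boldsymbol{Q}^*\|_F\le\delta_2$ and $\|\boldsymbol{\lambda}-\boldsymbol{\lambda}^*\|\le\delta_2$. *)

theory Defs
  imports "HOL-Analysis.Analysis" "HOL-Computational_Algebra.Polynomial"
begin

type_synonym 'n rvec = "(real, 'n) vec"
type_synonym 'n rmat = "((real, 'n) vec, 'n) vec"

(* Matrices in S^{n x n} are 'n rmat with transpose X = X; the index type 'n is
   finite and well-ordered so that "nonincreasing order" of eigenvalues makes sense.
   The Frobenius norm is the library norm on 'n rmat. *)

definition sym_mat :: "'n::finite rmat \<Rightarrow> bool" where
  "sym_mat X \<longleftrightarrow> transpose X = X"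

definition Diag :: "'n::finite rvec \<Rightarrow> 'n rmat" where
  "Diag v = (\<chi> i j. if i = j then v $ i else 0)"

definition charpoly :: "'n::finite rmat \<Rightarrow> real poly" where
  "charpoly X = det (\<chi> i j. (if i = j then [:0, 1:] else 0) - [:X $ i $ j:])"

definition nonincr :: "'n::{finite,wellorder} rvec \<Rightarrow> bool" where
  "nonincr v \<longleftrightarrow> (\<forall>i j. i \<le> j \<longrightarrow> v $ j \<le> v $ i)"

definition eigvals :: "'n::{finite,wellorder} rmat \<Rightarrow> 'n rvec" where
  "eigvals X = (THE v. nonincr v \<and> image_mset (\<lambda>i. v $ i) (mset_set UNIV) = proots (charpoly X))"

definition feas1 :: "('n rmat \<Rightarrow> 'q::finite rvec) \<Rightarrow> ('n::{finite,wellorder} rvec) set \<Rightarrow> ('n rmat) set" where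
  "feas1 G C = {X. sym_mat X \<and> G X = 0 \<and> eigvals X \<in> C}"

definition feas2 :: "('n rmat \<Rightarrow> 'q::finite rvec) \<Rightarrow> ('n::{finite,wellorder} rvec) set
                     \<Rightarrow> ('n rmat \<times> 'n rvec) set" where
  "feas2 G C = {(Q, l). orthogonal_matrix Q \<and> nonincr l \<and>
                        G (Q ** Diag l ** transpose Q) = 0 \<and> l \<in> C}"

definition local_min_P1 :: "('n rmat \<Rightarrow> real) \<Rightarrow> ('n rmat \<Rightarrow> 'q::finite rvec)
     \<Rightarrow> ('n::{finite,wellorder} rvec) set \<Rightarrow> 'n rmat \<Rightarrow> bool" where
  "local_min_P1 F G C Xs \<longleftrightarrow> Xs \<in> feas1 G C \<and>
     (\<exists>d1>0. \<forall>X\<in>feas1 G C. norm (X - Xs) \<le> d1 \<longrightarrow> F Xs \<le> F X)"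

definition local_min_P2 :: "('n rmat \<Rightarrow> real) \<Rightarrow> ('n rmat \<Rightarrow> 'q::finite rvec)
     \<Rightarrow> ('n::{finite,wellorder} rvec) set \<Rightarrow> 'n rmat \<Rightarrow> 'n rvec \<Rightarrow> bool" where
  "local_min_P2 F G C Qs ls \<longleftrightarrow> (Qs, ls) \<in> feas2 G C \<and>
     (\<exists>d2>0. \<forall>(Q, l)\<in>feas2 G C. norm (Q - Qs) \<le> d2 \<and> norm (l - ls) \<le> d2 \<longrightarrow>
        F (Qs ** Diag ls ** transpose Qs) \<le> F (Q ** Diag l ** transpose Q))"

definition spectral_decomp :: "'n rmat \<Rightarrow> 'n::{finite,wellorder} rmat \<Rightarrow> bool" where
  "spectral_decomp Q X \<longleftrightarrow> orthogonal_matrix Q \<and> X = Q ** Diag (eigvals X) ** transpose Q"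

end

theory Submission
  imports Defs
begin


lemma nonincr_mset_unique:
  fixes v w :: "'n::{finite,wellorder} rvec"
  assumes "nonincr v" "nonincr w"
    and "image_mset (\<lambda>i. v $ i) (mset_set UNIV) = image_mset (\<lambda>i. w $ i) (mset_set UNIV)"
  shows "v = w"
proof -
  define xs where "xs = sorted_list_of_set (UNIV :: 'n set)"
  have mx: "mset_set (UNIV::'n set) = mset xs" unfolding xs_def by (metis mset_sorted_list_of_multiset sorted_list_of_mset_set)
  have sx: "sorted xs" "set xs = UNIV" unfolding xs_def by auto
  have sv: "sorted (rev (map (\<lambda>i. v $ i) xs))" if "nonincr v" for v :: "'n rvec"
  proof -
    have "sorted_wrt (\<lambda>a b. b \<le> a) (map (\<lambda>i. v $ i) xs)"
      using sx(1) that unfolding nonincr_def sorted_wrt_map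
      by (metis (mono_tags, lifting) sorted_wrt_mono_rel)
    then show ?thesis by (simp add: sorted_wrt_rev)
  qed
  have m: "mset (rev (map (\<lambda>i. v $ i) xs)) = mset (rev (map (\<lambda>i. w $ i) xs))"
    using assms(3) unfolding mx by simp
  have "rev (map (\<lambda>i. v $ i) xs) = rev (map (\<lambda>i. w $ i) xs)"
    using properties_for_sort[OF m sv[OF assms(1)]] properties_for_sort[OF refl sv[OF assms(2)]]
    by simp
  then have "map (\<lambda>i. v $ i) xs = map (\<lambda>i. w $ i) xs" by simp
  then show ?thesis using sx(2) by (simp add: vec_eq_iff map_eq_conv)
qed



definition Lp :: "'n::finite rmat \<Rightarrow> ((real poly, 'n) vec, 'n) vec" where
  "Lp A = (\<chi> i j. [:A $ i $ j:])"

lemma Lp_mult: "Lp (A ** B) = Lp A ** Lp B"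
  by (simp add: Lp_def matrix_matrix_mult_def vec_eq_iff mult_to_poly sum_to_poly mult_ac)

lemma mat_sub_ldistrib: "(A::'a::ring_1^'n::finite^'m) ** (B - C) = A ** B - A ** C"
  by (simp add: matrix_matrix_mult_def vec_eq_iff sum_subtractf algebra_simps)

lemma mat_sub_rdistrib: "((B - C)::'a::ring_1^'n::finite^'m) ** (A::'a^'p^'n) = B ** A - C ** A"
  by (simp add: matrix_matrix_mult_def vec_eq_iff sum_subtractf algebra_simps)

lemma sum_single_mset: "finite A \<Longrightarrow> (\<Sum>i\<in>A. {# f i #}) = image_mset f (mset_set A)"
  by (induction A rule: finite_induct) auto

lemma Lp_one: "Lp (mat 1) = mat 1"
  by (simp add: Lp_def mat_def vec_eq_iff)

lemma Lp_diff: "Lp (A - B) = Lp A - Lp B"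
  by (simp add: Lp_def vec_eq_iff)

lemma charpoly_alt: "charpoly X = det (mat [:0,1:] - Lp X)"
  unfolding charpoly_def
  by (rule arg_cong[where f=det]) (simp add: Lp_def mat_def vec_eq_iff)

lemma mat_comm: "mat (c::'a::comm_semiring_1) ** A = A ** mat c"
  by (simp add: matrix_matrix_mult_def mat_def vec_eq_iff if_distrib if_distribR
      sum.delta sum.delta' mult.commute cong: if_cong)

lemma charpoly_similar:
  fixes Q X :: "'n::finite rmat"
  assumes "orthogonal_matrix Q"
  shows "charpoly (Q ** X ** transpose Q) = charpoly X"
proof -
  have QQ: "Q ** transpose Q = mat 1" using assms by (simp add: orthogonal_matrix_def)
  have d1: "det (Lp Q) * det (Lp (transpose Q)) = 1"
    by (metis det_mul Lp_mult QQ Lp_one det_I)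
  have "mat [:0,1:] - Lp (Q ** X ** transpose Q)
      = Lp Q ** (mat [:0,1:] - Lp X) ** Lp (transpose Q)"
  proof -
    have "Lp Q ** mat [:0,1:] ** Lp (transpose Q) = mat [:0,1:]"
      by (metis QQ Lp_mult Lp_one mat_comm matrix_mul_assoc matrix_mul_rid)
    then show ?thesis
      by (simp add: Lp_diff Lp_mult mat_sub_ldistrib mat_sub_rdistrib matrix_mul_assoc)
  qed
  then have "charpoly (Q ** X ** transpose Q)
      = det (Lp Q) * det (mat [:0,1:] - Lp X) * det (Lp (transpose Q))"
    by (simp add: charpoly_alt det_mul)
  also have "\<dots> = charpoly X" using d1 by (simp add: charpoly_alt algebra_simps)
  finally show ?thesis .
qed

lemma charpoly_Diag: "charpoly (Diag l) = (\<Prod>i\<in>UNIV. [:- (l $ i), 1:])"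
  unfolding charpoly_alt
  by (subst det_diagonal) (auto simp: Lp_def mat_def Diag_def)

lemma proots_Diag: "proots (charpoly (Diag l)) = image_mset (\<lambda>i. l $ i) (mset_set UNIV)"
proof -
  have "proots (charpoly (Diag l)) = (\<Sum>i\<in>UNIV. {# l $ i #})"
    unfolding charpoly_Diag by (subst proots_prod) auto
  also have "\<dots> = image_mset (\<lambda>i. l $ i) (mset_set UNIV)"
    by (rule sum_single_mset) simp
  finally show ?thesis .
qed



lemma quad_nonpos: fixes s c :: real assumes "s \<ge> 0" "\<forall>t. 2 * t * s + t^2*c \<le> 0" shows "s = 0"
proof (rule ccontr)
  assume "s \<noteq> 0" then have s: "s > 0" using assms by simp
  define t where "t = s / (\<bar>c\<bar> + 1)"
  have t: "t > 0" using s by (simp add: t_def)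
  have "t * (2 * s + t*c) \<le> 0" using assms(2)[rule_format, of t] by (simp add: power2_eq_square algebra_simps)
  then have 1: "2 * s + t*c \<le> 0" using t by (simp add: mult_le_0_iff)
  have "t * \<bar>c\<bar> < s" using s unfolding t_def by (simp add: field_simps)
  moreover have "- (t * \<bar>c\<bar>) \<le> t*c" using t mult_left_mono[of "-\<bar>c\<bar>" c t] by simp
  ultimately show False using 1 s by linarith
qed

lemma sym_inner:
  fixes A :: "'n::finite rmat"
  assumes "transpose A = A"
  shows "(A *v x) \<bullet> y = x \<bullet> (A *v y)"
  by (metis assms dot_lmul_matrix vector_transpose_matrix)

lemma spectral_seq:
  fixes A :: "'n::finite rmat"
  assumes sym: "transpose A = A"
  shows "k \<le> CARD('n) \<Longrightarrow> \<exists>u \<mu>. \<forall>i<k. norm (u i) = 1 \<and> A *v u i = \<mu> i *\<^sub>R u i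
     \<and> (\<forall>j<i. u j \<bullet> u i = 0)
     \<and> (\<forall>x. (\<forall>j<i. u j \<bullet> x = 0) \<longrightarrow> x \<bullet> (A *v x) \<le> \<mu> i * (x \<bullet> x))"
proof (induction k)
  case 0 show ?case by auto
next
  case (Suc k)
  then obtain u \<mu> where H: "\<forall>i<k. norm (u i) = 1 \<and> A *v u i = \<mu> i *\<^sub>R u i
     \<and> (\<forall>j<i. u j \<bullet> u i = 0)
     \<and> (\<forall>x. (\<forall>j<i. u j \<bullet> x = 0) \<longrightarrow> x \<bullet> (A *v x) \<le> \<mu> i * (x \<bullet> x))"
    by (metis Suc_leD)
  define W where "W = {x. \<forall>j<k. u j \<bullet> x = 0}"
  define S where "S = W \<inter> sphere 0 1"
  have "W = (\<Inter>j\<in>{..<k}. {x. u j \<bullet> x = 0})" unfolding W_def by auto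
  then have "closed W" by (simp add: closed_INT closed_hyperplane)
  then have cS: "compact S" unfolding S_def
    by (simp add: compact_eq_bounded_closed closed_Int bounded_Int)
  have "span (u ` {..<k}) \<noteq> UNIV"
  proof
    assume "span (u ` {..<k}) = UNIV"
    then have "dim (UNIV :: 'n rvec set) \<le> card (u ` {..<k})"
      by (intro dim_le_card) auto
    also have "\<dots> \<le> k" using card_image_le[of "{..<k}" u] by simp
    finally show False using Suc.prems by simp
  qed
  then obtain a :: "'n rvec" where a: "a \<noteq> 0" "\<forall>x\<in>span (u ` {..<k}). a \<bullet> x = 0"
    using span_not_UNIV_orthogonal by blast
  have "a /\<^sub>R norm a \<in> S"
    unfolding S_def W_def using a span_base[of _ "u ` {..<k}"]
    by (auto simp: inner_commute)
  then have "S \<noteq> {}" by auto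
  moreover have "continuous_on S (\<lambda>x. x \<bullet> (A *v x))"
    by (intro continuous_intros matrix_vector_mult_linear_continuous_on)
  ultimately obtain x where x: "x \<in> S" "\<forall>y\<in>S. y \<bullet> (A *v y) \<le> x \<bullet> (A *v x)"
    using continuous_attains_sup[OF cS] by blast
  define m where "m = x \<bullet> (A *v x)"
  have xW: "x \<in> W" and nx: "norm x = 1" using x(1) by (auto simp: S_def)
  have xx: "x \<bullet> x = 1" using nx by (simp add: power2_norm_eq_inner[symmetric])
  have Wscale: "c *\<^sub>R y \<in> W" if "y \<in> W" for c y using that by (auto simp: W_def)
  have Wadd: "y + z \<in> W" if "y \<in> W" "z \<in> W" for y z using that by (auto simp: W_def inner_add_right)
  have bound: "y \<bullet> (A *v y) \<le> m * (y \<bullet> y)" if "y \<in> W" for y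
  proof (cases "y = 0")
    case True then show ?thesis by simp
  next
    case False
    define y' where "y' = (1 / norm y) *\<^sub>R y"
    have "y' \<in> S" using that False Wscale unfolding S_def y'_def by auto
    then have "y' \<bullet> (A *v y') \<le> m" using x(2) m_def by auto
    moreover have "y' \<bullet> (A *v y') = (y \<bullet> (A *v y)) / (norm y)^2"
      unfolding y'_def by (simp add: matrix_vector_mult_scaleR power2_eq_square)
    moreover have "y \<bullet> y = (norm y)^2" by (simp add: power2_norm_eq_inner)
    ultimately show ?thesis using False by (simp add: field_simps)
  qed
  define v where "v = A *v x - m *\<^sub>R x"
  have uAx: "u j \<bullet> (A *v x) = 0" if "j < k" for j
  proof -
    have "u j \<bullet> (A *v x) = (A *v u j) \<bullet> x" using sym_inner[OF sym] by simp
    also have "\<dots> = 0" using H that xW by (simp add: W_def)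
    finally show ?thesis .
  qed
  have vW: "v \<in> W" using xW uAx by (auto simp: W_def v_def inner_diff_right)
  have xv: "x \<bullet> v = 0" using xx by (simp add: v_def m_def inner_diff_right)
  have vAx: "v \<bullet> (A *v x) = v \<bullet> v"
  proof -
    have "A *v x = v + m *\<^sub>R x" by (simp add: v_def)
    then show ?thesis using xv by (simp add: inner_add_right inner_commute)
  qed
  have xAv: "x \<bullet> (A *v v) = v \<bullet> (A *v x)"
    using sym_inner[OF sym, of x v] by (simp add: inner_commute)
  have "\<forall>t. 2 * t * (v \<bullet> v) + t^2 * (v \<bullet> (A *v v) - m * (v \<bullet> v)) \<le> 0"
  proof
    fix t :: real
    have ineq: "(x + t *\<^sub>R v) \<bullet> (A *v (x + t *\<^sub>R v)) \<le> m * ((x + t *\<^sub>R v) \<bullet> (x + t *\<^sub>R v))"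
      using bound Wadd Wscale xW vW by blast
    have e1: "(x + t *\<^sub>R v) \<bullet> (A *v (x + t *\<^sub>R v)) = m + 2 * t * (v \<bullet> v) + t^2 * (v \<bullet> (A *v v))"
      using vAx xAv by (simp add: matrix_vector_right_distrib matrix_vector_mult_scaleR inner_add_left
          inner_add_right m_def power2_eq_square algebra_simps)
    have e2: "(x + t *\<^sub>R v) \<bullet> (x + t *\<^sub>R v) = 1 + t^2 * (v \<bullet> v)"
      using xx xv by (simp add: inner_add_left inner_add_right inner_commute power2_eq_square algebra_simps)
    have "m + 2 * t * (v \<bullet> v) + t^2 * (v \<bullet> (A *v v)) \<le> m * (1 + t^2 * (v \<bullet> v))"
      using ineq unfolding e1 e2 .
    then show "2 * t * (v \<bullet> v) + t^2 * (v \<bullet> (A *v v) - m * (v \<bullet> v)) \<le> 0"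
      by (simp add: algebra_simps)
  qed
  then have "v \<bullet> v = 0" by (intro quad_nonpos) auto
  then have eig: "A *v x = m *\<^sub>R x" by (simp add: v_def)
  show ?case
  proof (intro exI allI impI)
    fix i assume i: "i < Suc k"
    show "norm ((u(k:=x)) i) = 1 \<and> A *v (u(k:=x)) i = (\<mu>(k:=m)) i *\<^sub>R (u(k:=x)) i
     \<and> (\<forall>j<i. (u(k:=x)) j \<bullet> (u(k:=x)) i = 0)
     \<and> (\<forall>y. (\<forall>j<i. (u(k:=x)) j \<bullet> y = 0) \<longrightarrow> y \<bullet> (A *v y) \<le> (\<mu>(k:=m)) i * (y \<bullet> y))"
    proof (cases "i = k")
      case True
      then show ?thesis using nx eig xW bound by (auto simp: W_def)
    next
      case False
      then have "i < k" using i by simp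
      then show ?thesis using H by auto
    qed
  qed
qed



definition idx :: "'n::{finite,wellorder} \<Rightarrow> nat" where
  "idx i = card {j. j < i}"

lemma idx_mono: "(i::'n::{finite,wellorder}) < j \<Longrightarrow> idx i < idx j"
  unfolding idx_def by (rule psubset_card_mono) auto

lemma idx_less: "idx (i::'n::{finite,wellorder}) < CARD('n)"
  unfolding idx_def by (rule psubset_card_mono) auto

lemma idx_inj: "idx (i::'n::{finite,wellorder}) = idx j \<Longrightarrow> i = j"
  by (metis idx_mono less_irrefl linorder_neqE)

lemma idx_le: "(i::'n::{finite,wellorder}) \<le> j \<Longrightarrow> idx i \<le> idx j"
  by (metis idx_mono less_imp_le order_le_less)

lemma spectral_exists:
  fixes X :: "'n::{finite,wellorder} rmat"
  assumes "sym_mat X"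
  shows "\<exists>P l. orthogonal_matrix P \<and> nonincr l \<and> X = P ** Diag l ** transpose P"
proof -
  have sym: "transpose X = X" using assms by (simp add: sym_mat_def)
  obtain u \<mu> where H: "\<forall>i<CARD('n). norm (u i) = 1 \<and> X *v u i = \<mu> i *\<^sub>R u i
     \<and> (\<forall>j<i. u j \<bullet> u i = 0)
     \<and> (\<forall>x. (\<forall>j<i. u j \<bullet> x = 0) \<longrightarrow> x \<bullet> (X *v x) \<le> \<mu> i * (x \<bullet> x))"
    using spectral_seq[OF sym, of "CARD('n)"] by auto
  define P :: "'n rmat" where "P = (\<chi> r c. u (idx c) $ r)"
  define l :: "'n rvec" where "l = (\<chi> c. \<mu> (idx c))"
  have col: "column c P = u (idx c)" for c by (simp add: P_def column_def vec_eq_iff)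
  have orth_u: "u a \<bullet> u b = 0" if "a \<noteq> b" "a < CARD('n)" "b < CARD('n)" for a b
    using H that by (metis inner_commute linorder_neqE_nat)
  have oP: "orthogonal_matrix P"
    unfolding orthogonal_matrix_orthonormal_columns col orthogonal_def
    using H idx_less idx_inj orth_u by metis
  have XP: "X ** P = P ** Diag l"
  proof -
    have "(X ** P) $ r $ c = (P ** Diag l) $ r $ c" for r c
    proof -
      have "(X ** P) $ r $ c = (X *v u (idx c)) $ r"
        by (simp add: matrix_matrix_mult_def matrix_vector_mult_def P_def)
      also have "\<dots> = \<mu> (idx c) * u (idx c) $ r"
      proof -
        have "X *v u (idx c) = \<mu> (idx c) *\<^sub>R u (idx c)" using H idx_less by blast
        then show ?thesis by simp
      qed
      also have "\<dots> = (P ** Diag l) $ r $ c"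
        by (simp add: matrix_matrix_mult_def Diag_def P_def l_def if_distrib if_distribR sum.delta' cong: if_cong)
      finally show ?thesis .
    qed
    then show ?thesis by (simp add: vec_eq_iff)
  qed
  have "X = X ** (P ** transpose P)" using oP by (simp add: orthogonal_matrix_def)
  also have "\<dots> = P ** Diag l ** transpose P" by (simp add: matrix_mul_assoc XP)
  finally have eq: "X = P ** Diag l ** transpose P" .
  have mono: "\<mu> b \<le> \<mu> a" if "a < b" "b < CARD('n)" for a b
  proof -
    have "u b \<bullet> (X *v u b) \<le> \<mu> a * (u b \<bullet> u b)"
      using H that by (metis less_trans order.strict_trans)
    moreover have "u b \<bullet> u b = 1" using H that by (simp add: power2_norm_eq_inner[symmetric])
    moreover have "u b \<bullet> (X *v u b) = \<mu> b * (u b \<bullet> u b)" using H that by simp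
    ultimately show ?thesis by simp
  qed
  have "nonincr l" unfolding nonincr_def l_def
    using mono idx_le idx_less by (metis le_neq_implies_less order_refl vec_lambda_beta)
  then show ?thesis using oP eq by blast
qed



lemma tendsto_matmul:
  fixes f :: "'a \<Rightarrow> ((real, 'n::finite) vec, 'm::finite) vec" and g :: "'a \<Rightarrow> ((real, 'p::finite) vec, 'n) vec"
  assumes "(f \<longlongrightarrow> A) F" "(g \<longlongrightarrow> B) F"
  shows "((\<lambda>x. f x ** g x) \<longlongrightarrow> A ** B) F"
  unfolding matrix_matrix_mult_def
  by (intro tendsto_vec_lambda tendsto_sum tendsto_mult tendsto_vec_nth assms)

lemma tendsto_transp:
  fixes f :: "'a \<Rightarrow> ((real, 'n::finite) vec, 'm::finite) vec"
  assumes "(f \<longlongrightarrow> A) F"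
  shows "((\<lambda>x. transpose (f x)) \<longlongrightarrow> transpose A) F"
  unfolding transpose_def
  by (intro tendsto_vec_lambda tendsto_vec_nth assms)

lemma tendsto_Diag:
  fixes f :: "'a \<Rightarrow> 'n::finite rvec"
  assumes "(f \<longlongrightarrow> v) F"
  shows "((\<lambda>x. Diag (f x)) \<longlongrightarrow> Diag v) F"
  unfolding Diag_def
proof (intro tendsto_vec_lambda)
  fix i j :: 'n
  show "((\<lambda>x. if i = j then f x $ i else 0) \<longlongrightarrow> (if i = j then v $ i else 0)) F"
    by (cases "i = j") (simp_all add: tendsto_vec_nth assms)
qed

lemma tendsto_decomp:
  fixes P :: "'a \<Rightarrow> 'n::finite rmat"
  assumes "(P \<longlongrightarrow> P0) F" "(l \<longlongrightarrow> l0) F"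
  shows "((\<lambda>x. P x ** Diag (l x) ** transpose (P x)) \<longlongrightarrow> P0 ** Diag l0 ** transpose P0) F"
  by (intro tendsto_matmul tendsto_transp tendsto_Diag assms)

lemma orth_norm_mv:
  fixes Q :: "'n::finite rmat"
  assumes "orthogonal_matrix Q"
  shows "norm (Q *v x) = norm x"
proof -
  have "(Q *v x) \<bullet> (Q *v x) = ((Q *v x) v* transpose (transpose Q)) \<bullet> x"
    by (simp add: dot_lmul_matrix)
  also have "\<dots> = (transpose Q *v (Q *v x)) \<bullet> x" by (simp only: vector_transpose_matrix)
  also have "\<dots> = x \<bullet> x"
    using assms by (simp add: matrix_vector_mul_assoc orthogonal_matrix_def)
  finally show ?thesis by (simp add: norm_eq_sqrt_inner)
qed

lemma norm_mul_orth_right: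
  fixes Q A :: "'n::finite rmat"
  assumes "orthogonal_matrix Q"
  shows "norm (A ** Q) = norm A"
proof -
  have "(A ** Q) $ i = transpose Q *v (A $ i)" for i
    by (simp add: vec_eq_iff matrix_matrix_mult_def matrix_vector_mult_def transpose_def mult.commute)
  then have "norm ((A ** Q) $ i) = norm (A $ i)" for i
    using assms orth_norm_mv[of "transpose Q"] by simp
  then show ?thesis by (simp add: norm_vec_def)
qed

lemma norm_transp:
  fixes A :: "'n::finite rmat"
  shows "norm (transpose A) = norm A"
proof -
  have sq: "(norm B)^2 = (\<Sum>i\<in>UNIV. \<Sum>j\<in>UNIV. B $ i $ j * B $ i $ j)" for B :: "'n rmat"
    by (simp add: power2_norm_eq_inner inner_vec_def)
  have "(norm (transpose A))^2 = (norm A)^2"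
    unfolding sq by (simp add: transpose_def) (rule sum.swap)
  then show ?thesis by (simp add: power2_eq_iff_nonneg)
qed

lemma norm_mul_orth_left:
  fixes Q A :: "'n::finite rmat"
  assumes "orthogonal_matrix Q"
  shows "norm (Q ** A) = norm A"
  by (metis assms matrix_transpose_mul norm_mul_orth_right norm_transp orthogonal_matrix_transpose)

lemma norm_Diag: "norm (Diag (l::'n::finite rvec)) = norm l"
proof -
  have "Diag l $ i = (l $ i) *\<^sub>R axis i 1" for i
    by (simp add: vec_eq_iff Diag_def axis_def)
  then have "norm (Diag l $ i) = norm (l $ i)" for i by simp
  then show ?thesis by (simp add: norm_vec_def)
qed

lemma diag_commute:
  fixes R :: "'n::finite rmat"
  assumes "\<forall>i j. i \<noteq> j \<longrightarrow> R $ i $ j = 0"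
  shows "R ** Diag m = Diag m ** R"
  using assms
  by (auto simp: vec_eq_iff matrix_matrix_mult_def Diag_def if_distrib if_distribR sum.delta sum.delta'
      cong: if_cong) metis

lemma decomp_unique:
  fixes P Q :: "'n::finite rmat"
  assumes oP: "orthogonal_matrix P" and oQ: "orthogonal_matrix Q"
    and d: "\<forall>i j. i \<noteq> j \<longrightarrow> l $ i \<noteq> l $ j"
    and eq: "P ** Diag l ** transpose P = Q ** Diag l ** transpose Q"
  shows "\<forall>i j. i \<noteq> j \<longrightarrow> (transpose Q ** P) $ i $ j = 0"
proof -
  define R where "R = transpose Q ** P"
  have "transpose Q ** (P ** Diag l ** transpose P) ** P = transpose Q ** (Q ** Diag l ** transpose Q) ** P"
    using eq by simp
  then have "R ** Diag l = Diag l ** R"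
    using oP oQ by (simp add: R_def matrix_mul_assoc orthogonal_matrix_def)
       (metis matrix_mul_assoc matrix_mul_lid matrix_mul_rid)
  then have "(R ** Diag l) $ i $ j = (Diag l ** R) $ i $ j" for i j by simp
  then have "R $ i $ j * l $ j = l $ i * R $ i $ j" for i j
    by (simp add: matrix_matrix_mult_def Diag_def if_distrib if_distribR sum.delta sum.delta' cong: if_cong)
  then show ?thesis using d unfolding R_def[symmetric]
    by (metis mult.commute mult_cancel_left)
qed

lemma neg_obtain:
  fixes S :: "('a::real_normed_vector \<times> 'b::real_normed_vector) set" and H :: "'a \<Rightarrow> 'b \<Rightarrow> real"
  assumes neg: "\<not> (\<exists>d2>0. \<forall>(Q', l)\<in>S. norm (Q' - Q) \<le> d2 \<and> norm (l - L) \<le> d2 \<longrightarrow> c \<le> H Q' l)"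
   and pos: "(e::real) > 0"
  obtains Q' l where "(Q', l) \<in> S" "norm (Q' - Q) \<le> e" "norm (l - L) \<le> e" "\<not> c \<le> H Q' l"
proof -
  have "\<not> (\<forall>(Q', l)\<in>S. norm (Q' - Q) \<le> e \<and> norm (l - L) \<le> e \<longrightarrow> c \<le> H Q' l)" using neg pos by blast
  then obtain x where "x \<in> S" "\<not> (case x of (Q', l) \<Rightarrow> norm (Q' - Q) \<le> e \<and> norm (l - L) \<le> e \<longrightarrow> c \<le> H Q' l)" by blast
  then show ?thesis using that by (cases x) auto
qed

lemma transp_Diag: "transpose (Diag l) = Diag l"
  by (simp add: Diag_def transpose_def vec_eq_iff)

lemma sym_decomp: "sym_mat (Q ** Diag l ** transpose Q)"
  by (simp add: sym_mat_def matrix_transpose_mul transp_Diag matrix_mul_assoc)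

lemma eigvals_decomp:
  fixes Q :: "'n::{finite,wellorder} rmat"
  assumes "orthogonal_matrix Q" "nonincr l"
  shows "eigvals (Q ** Diag l ** transpose Q) = l"
  unfolding eigvals_def
proof (rule the_equality)
  show "nonincr l \<and> image_mset (($) l) (mset_set UNIV) = proots (charpoly (Q ** Diag l ** transpose Q))"
    using assms by (simp add: charpoly_similar proots_Diag)
  show "v = l" if "nonincr v \<and> image_mset (($) v) (mset_set UNIV) = proots (charpoly (Q ** Diag l ** transpose Q))" for v
    using that assms by (intro nonincr_mset_unique) (auto simp: charpoly_similar proots_Diag)
qed

lemma eigvals_sym:
  fixes X :: "'n::{finite,wellorder} rmat"
  assumes "sym_mat X"
  shows "nonincr (eigvals X) \<and> (\<exists>P. orthogonal_matrix P \<and> X = P ** Diag (eigvals X) ** transpose P)"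
proof -
  obtain P l where "orthogonal_matrix P" "nonincr l" "X = P ** Diag l ** transpose P"
    using spectral_exists[OF assms] by blast
  moreover then have "eigvals X = l" using eigvals_decomp by blast
  ultimately show ?thesis by auto
qed

lemma lim_inv:
  fixes f :: "nat \<Rightarrow> 'a::real_normed_vector"
  assumes "\<forall>n. norm (f n - a) \<le> inverse (real (Suc n))"
  shows "f \<longlonglongrightarrow> a"
  unfolding Lim_null[of f a]
  by (rule Lim_null_comparison[OF always_eventually LIMSEQ_inverse_real_of_nat]) (use assms in auto)

lemma ev_close:
  fixes f :: "nat \<Rightarrow> 'a::real_normed_vector"
  assumes "f \<longlonglongrightarrow> a" "d > 0"
  shows "eventually (\<lambda>n. norm (f n - a) \<le> d) sequentially"
proof -
  have "eventually (\<lambda>n. dist (f n) a < d) sequentially" using assms tendsto_iff by blast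
  then show ?thesis by (rule eventually_mono) (simp add: dist_norm)
qed

lemma P1_imp_P2:
  fixes F :: "'n::{finite,wellorder} rmat \<Rightarrow> real" and G :: "'n rmat \<Rightarrow> 'q::finite rvec"
  assumes lm: "local_min_P1 F G C Xs" and sd: "spectral_decomp Q Xs"
  shows "local_min_P2 F G C Q (eigvals Xs)"
proof -
  obtain d1 where d1: "d1 > 0" "\<forall>X\<in>feas1 G C. norm (X - Xs) \<le> d1 \<longrightarrow> F Xs \<le> F X"
    and Xf: "Xs \<in> feas1 G C" using lm unfolding local_min_P1_def by blast
  let ?l = "eigvals Xs"
  have oQ: "orthogonal_matrix Q" and XQ: "Xs = Q ** Diag ?l ** transpose Q"
    using sd by (auto simp: spectral_decomp_def)
  have ni: "nonincr ?l" using eigvals_sym Xf by (auto simp: feas1_def)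
  have feas: "(Q, ?l) \<in> feas2 G C" using Xf oQ ni by (simp add: feas2_def feas1_def XQ[symmetric])
  show ?thesis unfolding local_min_P2_def
  proof (rule conjI[OF feas], rule ccontr)
    assume neg: "\<not> (\<exists>d2>0. \<forall>(Q', l)\<in>feas2 G C. norm (Q' - Q) \<le> d2 \<and> norm (l - ?l) \<le> d2 \<longrightarrow>
        F (Q ** Diag ?l ** transpose Q) \<le> F (Q' ** Diag l ** transpose Q'))"
    have "\<forall>n. \<exists>p\<in>feas2 G C. norm (fst p - Q) \<le> inverse (real (Suc n)) \<and> norm (snd p - ?l) \<le> inverse (real (Suc n))
       \<and> F (fst p ** Diag (snd p) ** transpose (fst p)) < F Xs"
    proof
      fix n
      have pos: "inverse (real (Suc n)) > 0" by simp
      obtain Q' l where ql: "(Q', l) \<in> feas2 G C" "norm (Q' - Q) \<le> inverse (real (Suc n))"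
        "norm (l - ?l) \<le> inverse (real (Suc n))" "\<not> F (Q ** Diag ?l ** transpose Q) \<le> F (Q' ** Diag l ** transpose Q')"
        by (rule neg_obtain[where H="\<lambda>Q' l. F (Q' ** Diag l ** transpose Q')", OF neg pos])
      show "\<exists>p\<in>feas2 G C. norm (fst p - Q) \<le> inverse (real (Suc n)) \<and> norm (snd p - ?l) \<le> inverse (real (Suc n))
       \<and> F (fst p ** Diag (snd p) ** transpose (fst p)) < F Xs"
        using ql XQ by (intro bexI[of _ "(Q', l)"]) auto
    qed
    then obtain p where p: "\<forall>n. p n \<in> feas2 G C \<and> norm (fst (p n) - Q) \<le> inverse (real (Suc n)) \<and> norm (snd (p n) - ?l) \<le> inverse (real (Suc n))
       \<and> F (fst (p n) ** Diag (snd (p n)) ** transpose (fst (p n))) < F Xs"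
      by metis
    have "(\<lambda>n. fst (p n)) \<longlonglongrightarrow> Q" using p by (intro lim_inv) auto
    moreover have "(\<lambda>n. snd (p n)) \<longlonglongrightarrow> ?l" using p by (intro lim_inv) auto
    ultimately have "(\<lambda>n. fst (p n) ** Diag (snd (p n)) ** transpose (fst (p n))) \<longlonglongrightarrow> Q ** Diag ?l ** transpose Q"
      by (rule tendsto_decomp)
    then have "(\<lambda>n. fst (p n) ** Diag (snd (p n)) ** transpose (fst (p n))) \<longlonglongrightarrow> Xs"
      by (simp only: XQ[symmetric])
    from ev_close[OF this d1(1)] obtain n where
      n: "norm (fst (p n) ** Diag (snd (p n)) ** transpose (fst (p n)) - Xs) \<le> d1"
      by (auto simp: eventually_sequentially)
    obtain Q' l where pn: "p n = (Q', l)" by fastforce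
    have "(Q', l) \<in> feas2 G C" using p pn by metis
    then have "Q' ** Diag l ** transpose Q' \<in> feas1 G C"
      by (auto simp: feas2_def feas1_def sym_decomp eigvals_decomp)
    then have "F Xs \<le> F (Q' ** Diag l ** transpose Q')" using d1 n pn by auto
    moreover have "F (Q' ** Diag l ** transpose Q') < F Xs" using p pn by (metis fst_conv snd_conv)
    ultimately show False by simp
  qed
qed

lemma P2_imp_P1:
  fixes F :: "'n::{finite,wellorder} rmat \<Rightarrow> real" and G :: "'n rmat \<Rightarrow> 'q::finite rvec"
  assumes sym: "sym_mat Xs" and dst: "\<forall>i j. i \<noteq> j \<longrightarrow> eigvals Xs $ i \<noteq> eigvals Xs $ j"
    and sd: "spectral_decomp Q0 Xs" and lm: "local_min_P2 F G C Q0 (eigvals Xs)"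
  shows "local_min_P1 F G C Xs"
proof -
  let ?l = "eigvals Xs"
  have oQ0: "orthogonal_matrix Q0" and XQ: "Xs = Q0 ** Diag ?l ** transpose Q0"
    using sd by (auto simp: spectral_decomp_def)
  obtain d2 where d2: "d2 > 0" and H2: "\<forall>(Q, l)\<in>feas2 G C. norm (Q - Q0) \<le> d2 \<and> norm (l - ?l) \<le> d2 \<longrightarrow>
        F (Q0 ** Diag ?l ** transpose Q0) \<le> F (Q ** Diag l ** transpose Q)"
    and feas: "(Q0, ?l) \<in> feas2 G C"
    using lm unfolding local_min_P2_def by blast
  have Xf: "Xs \<in> feas1 G C" using feas sym by (simp add: feas2_def feas1_def XQ[symmetric])
  show ?thesis unfolding local_min_P1_def
  proof (rule conjI[OF Xf], rule ccontr)
    assume neg: "\<not> (\<exists>d1>0. \<forall>X\<in>feas1 G C. norm (X - Xs) \<le> d1 \<longrightarrow> F Xs \<le> F X)"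
    have "\<forall>d1>0. \<exists>X\<in>feas1 G C. norm (X - Xs) \<le> d1 \<and> F X < F Xs" using neg by (auto simp: not_le)
    then have "\<forall>n. \<exists>X. X \<in> feas1 G C \<and> norm (X - Xs) \<le> inverse (real (Suc n)) \<and> F X < F Xs"
      by (metis inverse_positive_iff_positive of_nat_0_less_iff zero_less_Suc)
    then obtain X where X: "\<forall>n. X n \<in> feas1 G C \<and> norm (X n - Xs) \<le> inverse (real (Suc n)) \<and> F (X n) < F Xs"
      by metis
    define L where "L n = eigvals (X n)" for n
    have symX: "sym_mat (X n)" for n using X by (simp add: feas1_def)
    have "\<forall>n. \<exists>P. orthogonal_matrix P \<and> X n = P ** Diag (L n) ** transpose P"
      using eigvals_sym[OF symX] unfolding L_def by blast
    then obtain P where P: "\<forall>n. orthogonal_matrix (P n) \<and> X n = P n ** Diag (L n) ** transpose (P n)"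
      by metis
    have niL: "nonincr (L n)" for n using eigvals_sym[OF symX[of n]] unfolding L_def by blast
    have XL: "X \<longlonglongrightarrow> Xs" using X by (intro lim_inv) auto
    have nL: "norm (L n) = norm (X n)" for n
    proof -
      have "norm (X n) = norm (P n ** Diag (L n) ** transpose (P n))" using P by simp
      also have "\<dots> = norm (Diag (L n))" using P
        by (simp add: norm_mul_orth_left norm_mul_orth_right)
      finally show ?thesis by (simp add: norm_Diag)
    qed
    have nX: "norm (X n) \<le> norm Xs + 1" for n
    proof -
      have "norm (X n) \<le> norm Xs + norm (X n - Xs)" by (rule norm_triangle_sub)
      moreover have "inverse (real (Suc n)) \<le> 1" by (simp add: inverse_le_1_iff)
      then have "norm (X n - Xs) \<le> 1" using X order_trans by blast
      ultimately show ?thesis by simp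
    qed
    have nP: "norm (P n) = norm (mat 1 :: 'n rmat)" for n
      using P norm_mul_orth_right[of "P n" "mat 1"] by simp
    have "bounded (range (\<lambda>n. (P n, L n)))"
      unfolding bounded_iff
    proof (intro exI ballI)
      fix y assume "y \<in> range (\<lambda>n. (P n, L n))"
      then obtain n where "y = (P n, L n)" by blast
      then show "norm y \<le> norm (mat 1 :: 'n rmat) + (norm Xs + 1)"
        using norm_Pair_le[of "P n" "L n"] nP[of n] nL[of n] nX[of n] by simp
    qed
    then obtain lim r where r: "strict_mono r" and lim: "((\<lambda>n. (P n, L n)) \<circ> r) \<longlonglongrightarrow> lim"
      using bounded_imp_convergent_subsequence by blast
    define Pi where "Pi = fst lim"
    define Li where "Li = snd lim"
    have PP: "(\<lambda>n. P (r n)) \<longlonglongrightarrow> Pi" unfolding Pi_def using tendsto_fst[OF lim] by (simp add: o_def)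
    have LL: "(\<lambda>n. L (r n)) \<longlonglongrightarrow> Li" unfolding Li_def using tendsto_snd[OF lim] by (simp add: o_def)
    have Xr: "(\<lambda>n. X (r n)) \<longlonglongrightarrow> Xs" using LIMSEQ_subseq_LIMSEQ[OF XL r] by (simp add: o_def)
    have "(\<lambda>n. P (r n) ** Diag (L (r n)) ** transpose (P (r n))) \<longlonglongrightarrow> Pi ** Diag Li ** transpose Pi"
      by (rule tendsto_decomp[OF PP LL])
    moreover have "(\<lambda>n. P (r n) ** Diag (L (r n)) ** transpose (P (r n))) = (\<lambda>n. X (r n))"
      using P by (simp add: fun_eq_iff)
    ultimately have "(\<lambda>n. X (r n)) \<longlonglongrightarrow> Pi ** Diag Li ** transpose Pi" by simp
    from LIMSEQ_unique[OF Xr this] have XPi: "Xs = Pi ** Diag Li ** transpose Pi" .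
    have "(\<lambda>n. transpose (P (r n)) ** P (r n)) \<longlonglongrightarrow> transpose Pi ** Pi"
      by (intro tendsto_matmul tendsto_transp PP)
    moreover have "(\<lambda>n. transpose (P (r n)) ** P (r n)) = (\<lambda>n. mat 1)"
      using P by (simp add: orthogonal_matrix_def)
    ultimately have "(\<lambda>n. mat 1) \<longlonglongrightarrow> transpose Pi ** Pi" by simp
    from LIMSEQ_unique[OF tendsto_const this] have "transpose Pi ** Pi = mat 1" by simp
    then have oPi: "orthogonal_matrix Pi" by (simp add: orthogonal_matrix)
    have niLi: "nonincr Li" unfolding nonincr_def
    proof (intro allI impI)
      fix i j :: 'n assume "i \<le> j"
      then have "\<forall>n. L (r n) $ j \<le> L (r n) $ i" using niL unfolding nonincr_def by blast
      then show "Li $ j \<le> Li $ i"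
        using LIMSEQ_le[OF tendsto_vec_nth[OF LL, of j] tendsto_vec_nth[OF LL, of i]] by blast
    qed
    have Lieq: "Li = ?l" using eigvals_decomp[OF oPi niLi] XPi by simp
    define R where "R = transpose Q0 ** Pi"
    have Rdiag: "\<forall>i j. i \<noteq> j \<longrightarrow> R $ i $ j = 0"
    proof -
      have "Pi ** Diag ?l ** transpose Pi = Q0 ** Diag ?l ** transpose Q0"
        using XPi XQ Lieq by metis
      then show ?thesis unfolding R_def using decomp_unique[OF oPi oQ0 dst] by blast
    qed
    have oR: "orthogonal_matrix R" unfolding R_def
      using oQ0 oPi by (simp add: orthogonal_matrix_mul)
    have PiR: "Pi ** transpose R = Q0"
    proof -
      have "Pi ** transpose R = (Pi ** transpose Pi) ** Q0"
        by (simp add: R_def matrix_transpose_mul matrix_mul_assoc)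
      also have "\<dots> = Q0" using oPi by (simp add: orthogonal_matrix_def)
      finally show ?thesis .
    qed
    have RDR: "transpose R ** Diag m ** R = Diag m" for m
    proof -
      have "transpose R ** Diag m ** R = transpose R ** (Diag m ** R)"
        by (simp add: matrix_mul_assoc)
      also have "\<dots> = transpose R ** (R ** Diag m)"
        using diag_commute[OF Rdiag, of m] by simp
      also have "\<dots> = (transpose R ** R) ** Diag m"
        by (simp add: matrix_mul_assoc)
      also have "\<dots> = Diag m" using oR by (simp add: orthogonal_matrix_def)
      finally show ?thesis .
    qed
    define Qn where "Qn n = P (r n) ** transpose R" for n
    have QnX: "Qn n ** Diag (L (r n)) ** transpose (Qn n) = X (r n)" for n
    proof -
      have "Qn n ** Diag (L (r n)) ** transpose (Qn n)
          = P (r n) ** (transpose R ** Diag (L (r n)) ** R) ** transpose (P (r n))"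
        by (simp add: Qn_def matrix_transpose_mul matrix_mul_assoc)
      also have "\<dots> = X (r n)" using P RDR by simp
      finally show ?thesis .
    qed
    have oQn: "orthogonal_matrix (Qn n)" for n
      unfolding Qn_def using P oR by (simp add: orthogonal_matrix_mul)
    have "(\<lambda>n. Qn n) \<longlonglongrightarrow> Pi ** transpose R"
      unfolding Qn_def by (intro tendsto_matmul PP tendsto_const)
    then have QnL: "Qn \<longlonglongrightarrow> Q0" using PiR by simp
    have LrL: "(\<lambda>n. L (r n)) \<longlonglongrightarrow> ?l" using LL Lieq by simp
    have "eventually (\<lambda>n. norm (Qn n - Q0) \<le> d2 \<and> norm (L (r n) - ?l) \<le> d2) sequentially"
      using ev_close[OF QnL d2] ev_close[OF LrL d2] by (rule eventually_conj)
    then obtain n where n: "norm (Qn n - Q0) \<le> d2" "norm (L (r n) - ?l) \<le> d2"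
      by (auto simp: eventually_sequentially)
    have Xrn: "X (r n) \<in> feas1 G C" "F (X (r n)) < F Xs" using X by auto
    have "(Qn n, L (r n)) \<in> feas2 G C"
      using oQn niL QnX Xrn unfolding feas2_def feas1_def L_def by auto
    then have "F (Q0 ** Diag ?l ** transpose Q0) \<le> F (X (r n))"
      using H2 n QnX by fastforce
    then show False using Xrn XQ[symmetric] by simp
  qed
qed

theorem theorem1:
  fixes F :: "'n::{finite,wellorder} rmat \<Rightarrow> real"
    and G :: "'n rmat \<Rightarrow> 'q::finite rvec"
    and C :: "('n rvec) set"
    and Xs :: "'n rmat"
  assumes "closed C"
    and "sym_mat Xs"
    and "\<forall>i j. i \<noteq> j \<longrightarrow> eigvals Xs $ i \<noteq> eigvals Xs $ j"
  shows "(local_min_P1 F G C Xs \<longleftrightarrow>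
            (\<exists>Q. spectral_decomp Q Xs \<and> local_min_P2 F G C Q (eigvals Xs)))
       \<and> ((\<exists>Q. spectral_decomp Q Xs \<and> local_min_P2 F G C Q (eigvals Xs)) \<longrightarrow>
            (\<forall>Q. spectral_decomp Q Xs \<longrightarrow> local_min_P2 F G C Q (eigvals Xs)))"
proof -
  obtain Q0 where Q0: "spectral_decomp Q0 Xs"
    using eigvals_sym[OF assms(2)] unfolding spectral_decomp_def by blast
  have R: "local_min_P1 F G C Xs" if "\<exists>Q. spectral_decomp Q Xs \<and> local_min_P2 F G C Q (eigvals Xs)"
    using that P2_imp_P1[OF assms(2) assms(3)] by blast
  have L: "\<forall>Q. spectral_decomp Q Xs \<longrightarrow> local_min_P2 F G C Q (eigvals Xs)" if "local_min_P1 F G C Xs"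
    using that P1_imp_P2 by blast
  show ?thesis using R L Q0 by blast
qed

end
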